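(* Suppose $N$ carries a graded complementation and $X$ is a Macaulay basis of $M$. Then, as $\mathbf{k}$-vector spaces, \[N=M\oplus\Big\{n\in N:\ n_b\in N_b\ominus W_b(X)\text{ for all }b\in B\Big\}.\]
   Context: Standing setup. $\mathbf{k}$ is a field. $(A,+,0)$ is a finitely generated, cancellative commutative monoid with a total order $\le$ which is a well-order, such that $0<a$ for every $a\neq0$ and $a\le a'$ implies $a+c\le a'+c$. $R=\bigoplus_{a\in A}R_a$ is a commutative Noetherian $\mathbf{k}$-algebra graded by $A$. $B$ is a well-ordered totally ordered set with an action $(a,b)\mapsto a\cdot b$ of $A$ with $0\cdot b=b$, $(a+a')\cdot b=a\cdot(a'\cdot b)$, monotone and cancellative in each argument. $N=\bigoplus_{b\in B}N_b$ is a Noetherian $R$-module graded by $B$ ($R_aN_b\subseteq N_{a\cdot b}$), $M\subseteq N$ an $R$-submodule; $n_b$ denotes the degree-$b$ component of $n\in N$. For $m\ne0$, $\deg m=\max\{b:m_b\ne0\}$, $\operatorname{lf}(m)=m_{\deg m}$. A finite set $X=\{m_1,\dots,m_n\}$ of nonzero elements of $M$ is a Macaulay basis of $M$ if the $R$-submodule generated by $\{\operatorname{lf}(p):0\ne p\in M\}$ equals that generated by $\operatorname{lf}(m_1),\dots,\operatorname{lf}(m_n)$. $W_b(X)=\operatorname{span}_{\mathbf{k}}\{r\operatorname{lf}(x): x\in X,\ r\in R\text{ homogeneous},\ r\operatorname{lf}(x)\in N_b\}$. A graded complementation on $N$ assigns to each $b$ and each subspace $W\le N_b$ a subspace $W^c\le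 N_b$ with $W\oplus W^c=N_b$; $U\ominus W:=U\cap W^c$. *)

theory Defs
  imports Complex_Main "HOL-Library.Multiset"
begin

definition fin_gen_monoid :: "'a::comm_monoid_add itself \<Rightarrow> bool" where
  "fin_gen_monoid _ \<longleftrightarrow>
     (\<exists>G::'a set. finite G \<and> (\<forall>a::'a. \<exists>ms. set_mset ms \<subseteq> G \<and> a = sum_mset ms))"

(* A decomposition V = (direct sum over i) V_i, given by the family of
   projections c i : V -> V_i onto the components (V_i = range (c i)). *)
definition graded_comp :: "('i \<Rightarrow> 'v::ab_group_add \<Rightarrow> 'v) \<Rightarrow> bool" where
  "graded_comp c \<longleftrightarrow>
     (\<forall>i x y. c i (x + y) = c i x + c i y) \<and>
     (\<forall>x. finite {i. c i x \<noteq> 0}) \<and>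
     (\<forall>x. x = (\<Sum>i\<in>{i. c i x \<noteq> 0}. c i x)) \<and>
     (\<forall>i j x. c i (c j x) = (if i = j then c j x else 0))"

definition hcomp :: "('i \<Rightarrow> 'v::ab_group_add \<Rightarrow> 'v) \<Rightarrow> 'i \<Rightarrow> 'v set" where
  "hcomp c i = {x. c i x = x}"

definition alg_map :: "('k::field \<Rightarrow> 'r::comm_ring_1) \<Rightarrow> bool" where
  "alg_map \<phi> \<longleftrightarrow> \<phi> 1 = 1 \<and> (\<forall>x y. \<phi> (x + y) = \<phi> x + \<phi> y) \<and> (\<forall>x y. \<phi> (x * y) = \<phi> x * \<phi> y)"

definition noetherian_module :: "('r::comm_ring_1 \<Rightarrow> 'n::ab_group_add \<Rightarrow> 'n) \<Rightarrow> bool" where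
  "noetherian_module s \<longleftrightarrow>
     (\<forall>U. module.subspace s U \<longrightarrow> (\<exists>F. finite F \<and> U = module.span s F))"

definition noetherian_ring :: "'r::comm_ring_1 itself \<Rightarrow> bool" where
  "noetherian_ring _ \<longleftrightarrow> noetherian_module ((*) :: 'r \<Rightarrow> 'r \<Rightarrow> 'r)"

definition gdeg :: "('b::linorder \<Rightarrow> 'n::ab_group_add \<Rightarrow> 'n) \<Rightarrow> 'n \<Rightarrow> 'b" where
  "gdeg nc m = Max {b. nc b m \<noteq> 0}"

definition lf :: "('b::linorder \<Rightarrow> 'n::ab_group_add \<Rightarrow> 'n) \<Rightarrow> 'n \<Rightarrow> 'n" where
  "lf nc m = nc (gdeg nc m) m"

definition macaulay_basis ::
  "('r::comm_ring_1 \<Rightarrow> 'n::ab_group_add \<Rightarrow> 'n) \<Rightarrow> ('b::linorder \<Rightarrow> 'n \<Rightarrow> 'n) \<Rightarrow> 'n set \<Rightarrow> 'n set \<Rightarrow> bool" where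
  "macaulay_basis s nc M X \<longleftrightarrow>
     finite X \<and> X \<subseteq> M - {0} \<and>
     module.span s {lf nc p | p. p \<in> M \<and> p \<noteq> 0} = module.span s (lf nc ` X)"

definition Wsp ::
  "('k::field \<Rightarrow> 'n::ab_group_add \<Rightarrow> 'n) \<Rightarrow> ('r::comm_ring_1 \<Rightarrow> 'n \<Rightarrow> 'n) \<Rightarrow>
   ('a \<Rightarrow> 'r \<Rightarrow> 'r) \<Rightarrow> ('b::linorder \<Rightarrow> 'n \<Rightarrow> 'n) \<Rightarrow> 'n set \<Rightarrow> 'b \<Rightarrow> 'n set" where
  "Wsp ks s rc nc X b = module.span ks
     {s r (lf nc x) | x r. x \<in> X \<and> (\<exists>a. r \<in> hcomp rc a) \<and> s r (lf nc x) \<in> hcomp nc b}"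

definition direct_sum :: "('k::field \<Rightarrow> 'n::ab_group_add \<Rightarrow> 'n) \<Rightarrow> 'n set \<Rightarrow> 'n set \<Rightarrow> 'n set \<Rightarrow> bool" where
  "direct_sum ks T U V \<longleftrightarrow> module.subspace ks U \<and> module.subspace ks V \<and>
     U \<subseteq> T \<and> V \<subseteq> T \<and> U \<inter> V = {0} \<and> (\<forall>t\<in>T. \<exists>u\<in>U. \<exists>v\<in>V. t = u + v)"

definition graded_complementation ::
  "('k::field \<Rightarrow> 'n::ab_group_add \<Rightarrow> 'n) \<Rightarrow> ('b \<Rightarrow> 'n \<Rightarrow> 'n) \<Rightarrow> ('b \<Rightarrow> 'n set \<Rightarrow> 'n set) \<Rightarrow> bool" where
  "graded_complementation ks nc cpl \<longleftrightarrow>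
     (\<forall>b W. module.subspace ks W \<and> W \<subseteq> hcomp nc b \<longrightarrow>
        direct_sum ks (hcomp nc b) W (cpl b W))"

definition gminus :: "('b \<Rightarrow> 'n set \<Rightarrow> 'n set) \<Rightarrow> 'b \<Rightarrow> 'n set \<Rightarrow> 'n set \<Rightarrow> 'n set" where
  "gminus cpl b U W = U \<inter> cpl b W"

end

theory Submission
  imports Defs
begin


lemma gc_addA: assumes "graded_comp c" shows "\<forall>i x y. c i (x + y) = c i x + c i y"
  using assms unfolding graded_comp_def by (elim conjE) assumption

lemma gc_finA: assumes "graded_comp c" shows "\<forall>x. finite {i. c i x \<noteq> 0}"
  using assms unfolding graded_comp_def by (elim conjE) assumption

lemma gc_idemA: assumes "graded_comp c" shows "\<forall>i j x. c i (c j x) = (if i = j then c j x else 0)"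
  using assms unfolding graded_comp_def by (elim conjE) assumption

lemma gc_add: "graded_comp c \<Longrightarrow> c i (x + y) = c i x + c i y"
  using gc_addA by blast

lemma gc_additive: "graded_comp c \<Longrightarrow> additive (c i)"
  by unfold_locales (rule gc_add)

lemma gc_zero: "graded_comp c \<Longrightarrow> c i 0 = 0"
  by (rule additive.zero[OF gc_additive])

lemma gc_diff: "graded_comp c \<Longrightarrow> c i (x - y) = c i x - c i y"
  by (rule additive.diff[OF gc_additive])

lemma gc_sum: "graded_comp c \<Longrightarrow> c i (sum f S) = (\<Sum>j\<in>S. c i (f j))"
  by (rule additive.sum[OF gc_additive])

lemma gc_idem: "graded_comp c \<Longrightarrow> c i (c j x) = (if i = j then c j x else 0)"
  using gc_idemA by blast

lemma gc_fin: "graded_comp c \<Longrightarrow> finite {i. c i x \<noteq> 0}"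
  using gc_finA by blast

lemma gc_dec: assumes "graded_comp c" shows "x = (\<Sum>i\<in>{i. c i x \<noteq> 0}. c i x)"
proof -
  have "\<forall>x. x = (\<Sum>i\<in>{i. c i x \<noteq> 0}. c i x)"
    using assms unfolding graded_comp_def by (elim conjE) assumption
  then show ?thesis by (rule spec)
qed

lemma gc_in_hcomp: "graded_comp c \<Longrightarrow> c i x \<in> hcomp c i"
  unfolding hcomp_def by (simp add: gc_idem)

lemma hcomp_comp: "graded_comp c \<Longrightarrow> x \<in> hcomp c i \<Longrightarrow> c j x = (if j = i then x else 0)"
  unfolding hcomp_def using gc_idem[of c j i x] by simp

lemma gc_ne: assumes "graded_comp c" "x \<noteq> 0" shows "\<exists>i. c i x \<noteq> 0"
proof (rule ccontr)
  assume "\<not> ?thesis" then have "{i. c i x \<noteq> 0} = {}" by auto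
  have "x = (\<Sum>i\<in>{i. c i x \<noteq> 0}. c i x)" by (rule gc_dec[OF assms(1)])
  also have "\<dots> = 0" unfolding \<open>{i. c i x \<noteq> 0} = {}\<close> by simp
  finally show False using assms(2) by simp
qed

lemma gdeg_in: "graded_comp nc \<Longrightarrow> m \<noteq> 0 \<Longrightarrow> nc (gdeg nc m) m \<noteq> 0"
proof -
  assume g: "graded_comp nc" and m: "m \<noteq> 0"
  have "{b. nc b m \<noteq> 0} \<noteq> {}" using gc_ne[OF g m] by blast
  then have "gdeg nc m \<in> {b. nc b m \<noteq> 0}" unfolding gdeg_def using Max_in gc_fin[OF g] by blast
  then show ?thesis by simp
qed

lemma le_gdeg: assumes g: "graded_comp nc" and b: "nc b m \<noteq> 0" shows "b \<le> gdeg nc m"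
  unfolding gdeg_def by (rule Max_ge[OF gc_fin[OF g]]) (simp add: b)

lemma gdeg_above: assumes g: "graded_comp nc" and b: "gdeg nc m < b" shows "nc b m = 0"
proof (rule ccontr)
  assume "nc b m \<noteq> 0"
  then have "b \<le> gdeg nc m" by (rule le_gdeg[OF g])
  then show False using b by simp
qed

lemma ks_module:
  assumes "module s" "alg_map \<phi>"
  shows "module (\<lambda>c. s (\<phi> c))"
proof -
  interpret N: module s by (rule assms(1))
  have p: "\<phi> 1 = 1" "\<And>x y. \<phi> (x + y) = \<phi> x + \<phi> y" "\<And>x y. \<phi> (x * y) = \<phi> x * \<phi> y"
    using assms(2) unfolding alg_map_def by auto
  show ?thesis
  proof
    fix a b x y
    show "s (\<phi> a) (x + y) = s (\<phi> a) x + s (\<phi> a) y" by (rule N.scale_right_distrib)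
    show "s (\<phi> (a + b)) x = s (\<phi> a) x + s (\<phi> b) x" unfolding p(2) by (rule N.scale_left_distrib)
    show "s (\<phi> a) (s (\<phi> b) x) = s (\<phi> (a * b)) x" unfolding p(3) by (rule N.scale_scale)
    show "s (\<phi> 1) x = x" unfolding p(1) by (rule N.scale_one)
  qed
qed

theorem mainTheorem5:
  fixes \<phi> :: "'k::field \<Rightarrow> 'r::comm_ring_1"
    and rc :: "'a::{cancel_comm_monoid_add, wellorder} \<Rightarrow> 'r \<Rightarrow> 'r"
    and act :: "'a \<Rightarrow> 'b::wellorder \<Rightarrow> 'b"
    and s :: "'r \<Rightarrow> 'n::ab_group_add \<Rightarrow> 'n"
    and nc :: "'b \<Rightarrow> 'n \<Rightarrow> 'n"
    and M X :: "'n set"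
    and cpl :: "'b \<Rightarrow> 'n set \<Rightarrow> 'n set"
  assumes A_fg: "fin_gen_monoid TYPE('a)"
    and A_pos: "\<And>a::'a. a \<noteq> 0 \<Longrightarrow> 0 < a"
    and A_mono: "\<And>a a' c::'a. a \<le> a' \<Longrightarrow> a + c \<le> a' + c"
    and R_alg: "alg_map \<phi>"
    and R_grad: "graded_comp rc"
    and R_klin: "\<And>a c x. rc a (\<phi> c * x) = \<phi> c * rc a x"
    and R_mult: "\<And>a a' x y. rc (a + a') (rc a x * rc a' y) = rc a x * rc a' y"
    and R_noeth: "noetherian_ring TYPE('r)"
    and act_0: "\<And>b. act 0 b = b"
    and act_add: "\<And>a a' b. act (a + a') b = act a (act a' b)"
    and act_mono1: "\<And>a a' b. a \<le> a' \<Longrightarrow> act a b \<le> act a' b"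
    and act_mono2: "\<And>a b b'. b \<le> b' \<Longrightarrow> act a b \<le> act a b'"
    and act_canc1: "\<And>a a' b. act a b = act a' b \<Longrightarrow> a = a'"
    and act_canc2: "\<And>a b b'. act a b = act a b' \<Longrightarrow> b = b'"
    and N_mod: "module s"
    and N_grad: "graded_comp nc"
    and N_klin: "\<And>b c n. nc b (s (\<phi> c) n) = s (\<phi> c) (nc b n)"
    and N_mult: "\<And>a b r n. nc (act a b) (s (rc a r) (nc b n)) = s (rc a r) (nc b n)"
    and N_noeth: "noetherian_module s"
    and M_sub: "module.subspace s M"
    and cpl: "graded_complementation (\<lambda>c. s (\<phi> c)) nc cpl"
    and X_mac: "macaulay_basis s nc M X"
  shows "direct_sum (\<lambda>c. s (\<phi> c)) UNIV M
           {n. \<forall>b. nc b n \<in> gminus cpl b (hcomp nc b) (Wsp (\<lambda>c. s (\<phi> c)) s rc nc X b)}"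
proof -
  interpret N: module s by (rule N_mod)
  interpret K: module "\<lambda>c. s (\<phi> c)" by (rule ks_module[OF N_mod R_alg])
  define W where "W = (\<lambda>b. Wsp (\<lambda>c. s (\<phi> c)) s rc nc X b)"
  define C where "C = {n. \<forall>b. nc b n \<in> gminus cpl b (hcomp nc b) (W b)}"
  have X_M: "X \<subseteq> M - {0}" and X_span: "N.span {lf nc p | p. p \<in> M \<and> p \<noteq> 0} = N.span (lf nc ` X)"
    using X_mac unfolding macaulay_basis_def by auto
  have M_K: "K.subspace M"
    using M_sub unfolding N.subspace_def K.subspace_def by auto
  have hc_sub: "K.subspace (hcomp nc b)" for b
    unfolding K.subspace_def hcomp_def using gc_add[OF N_grad] gc_zero[OF N_grad] N_klin by auto
  have W_sub: "K.subspace (W b)" for b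
    unfolding W_def Wsp_def by (rule K.subspace_span)
  have W_in: "W b \<subseteq> hcomp nc b" for b
    unfolding W_def Wsp_def by (rule K.span_minimal[OF _ hc_sub]) blast
  have ds: "direct_sum (\<lambda>c. s (\<phi> c)) (hcomp nc b) (W b) (cpl b (W b))" for b
    using cpl W_sub W_in unfolding graded_complementation_def by blast
  have cpl_sub: "K.subspace (cpl b (W b))" and cpl_in: "cpl b (W b) \<subseteq> hcomp nc b"
    and cpl_int: "W b \<inter> cpl b (W b) = {0}"
    and cpl_dec: "\<And>t. t \<in> hcomp nc b \<Longrightarrow> \<exists>u\<in>W b. \<exists>v\<in>cpl b (W b). t = u + v" for b
    using ds[of b] unfolding direct_sum_def by auto
  have C_iff: "n \<in> C \<longleftrightarrow> (\<forall>b. nc b n \<in> cpl b (W b))" for n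
    unfolding C_def gminus_def using cpl_in gc_in_hcomp[OF N_grad] by auto
  have hcomp_s: "s r v \<in> hcomp nc (act a d)" if "r \<in> hcomp rc a" "v \<in> hcomp nc d" for r v a d
    using N_mult[of a d r v] that unfolding hcomp_def by simp
  have lf_h: "lf nc x \<in> hcomp nc (gdeg nc x)" for x
    unfolding lf_def by (rule gc_in_hcomp[OF N_grad])
  have G: "nc b (s r' (lf nc x)) \<in> W b" if x: "x \<in> X" and r': "r' \<in> hcomp rc a" for x r' a b
  proof -
    have y: "s r' (lf nc x) \<in> hcomp nc (act a (gdeg nc x))" by (rule hcomp_s[OF r' lf_h])
    show ?thesis
    proof (cases "b = act a (gdeg nc x)")
      case True
      then have e: "nc b (s r' (lf nc x)) = s r' (lf nc x)" using y unfolding hcomp_def by simp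
      have "s r' (lf nc x) \<in> W b" unfolding W_def Wsp_def
        by (rule K.span_base) (use x r' y True in blast)
      then show ?thesis using e by simp
    next
      case False
      then show ?thesis using hcomp_comp[OF N_grad y, of b] K.subspace_0[OF W_sub] by simp
    qed
  qed
  have G': "nc b (s r (lf nc x)) \<in> W b" if x: "x \<in> X" for x r b
  proof -
    have "s (\<Sum>a\<in>{a. rc a r \<noteq> 0}. rc a r) (lf nc x) = (\<Sum>a\<in>{a. rc a r \<noteq> 0}. s (rc a r) (lf nc x))"
      by (rule N.scale_sum_left)
    then have e: "s r (lf nc x) = (\<Sum>a\<in>{a. rc a r \<noteq> 0}. s (rc a r) (lf nc x))"
      using gc_dec[OF R_grad, of r, symmetric] by simp
    have "nc b (s r (lf nc x)) = (\<Sum>a\<in>{a. rc a r \<noteq> 0}. nc b (s (rc a r) (lf nc x)))"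
      unfolding e by (rule gc_sum[OF N_grad])
    also have "\<dots> \<in> W b"
      by (rule K.subspace_sum[OF W_sub]) (rule G[OF x gc_in_hcomp[OF R_grad]])
    finally show ?thesis .
  qed
  have G'': "nc b y \<in> W b" if y: "y \<in> N.span (lf nc ` X)" for y b
  proof -
    obtain t u where t: "finite t" "t \<subseteq> lf nc ` X" and ye: "y = (\<Sum>v\<in>t. s (u v) v)"
      using y unfolding N.span_explicit by blast
    have "nc b y = (\<Sum>v\<in>t. nc b (s (u v) v))" unfolding ye by (rule gc_sum[OF N_grad])
    also have "\<dots> \<in> W b"
    proof (rule K.subspace_sum[OF W_sub])
      fix v assume "v \<in> t"
      then obtain x where "x \<in> X" "v = lf nc x" using t by blast
      then show "nc b (s (u v) v) \<in> W b" using G' by simp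
    qed
    finally show ?thesis .
  qed
  have inter: "m = 0" if m: "m \<in> M" "m \<in> C" for m
  proof (rule ccontr)
    assume m0: "m \<noteq> 0"
    define g where "g = gdeg nc m"
    have "lf nc m \<in> N.span (lf nc ` X)"
      using X_span N.span_base[of "lf nc m" "{lf nc p | p. p \<in> M \<and> p \<noteq> 0}"] m m0 by blast
    then have "nc g (lf nc m) \<in> W g" by (rule G'')
    moreover have "nc g (lf nc m) = nc g m" unfolding lf_def g_def by (simp add: gc_idem[OF N_grad])
    moreover have "nc g m \<in> cpl g (W g)" using m C_iff by blast
    ultimately have "nc g m = 0" using cpl_int by auto
    then show False using gdeg_in[OF N_grad m0] g_def by simp
  qed
  have E: "(\<forall>b'>b. nc b' (s r x) = 0) \<and> nc b (s r x) = s r (lf nc x)"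
    if x: "x \<in> X" and r: "r \<in> hcomp rc a" and h: "s r (lf nc x) \<in> hcomp nc b"
      and nz: "s r (lf nc x) \<noteq> 0" for x r a b
  proof -
    define g where "g = gdeg nc x"
    define S where "S = {d. nc d x \<noteq> 0}"
    have x0: "x \<noteq> 0" using x X_M by auto
    have gS: "g \<in> S" unfolding S_def g_def using gdeg_in[OF N_grad x0] by simp
    have fS: "finite S" unfolding S_def by (rule gc_fin[OF N_grad])
    have le: "d \<le> g" if "d \<in> S" for d using that le_gdeg[OF N_grad] unfolding S_def g_def by auto
    have tg: "s r (nc d x) \<in> hcomp nc (act a d)" for d by (rule hcomp_s[OF r gc_in_hcomp[OF N_grad]])
    have "s r (\<Sum>d\<in>S. nc d x) = (\<Sum>d\<in>S. s r (nc d x))"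
      by (rule N.scale_sum_right)
    then have sx: "s r x = (\<Sum>d\<in>S. s r (nc d x))"
      using gc_dec[OF N_grad, of x, symmetric] unfolding S_def by simp
    have comp: "nc b' (s r x) = (\<Sum>d\<in>S. if b' = act a d then s r (nc d x) else 0)" for b'
    proof -
      have "nc b' (s r x) = (\<Sum>d\<in>S. nc b' (s r (nc d x)))" unfolding sx by (rule gc_sum[OF N_grad])
      also have "\<dots> = (\<Sum>d\<in>S. if b' = act a d then s r (nc d x) else 0)"
        by (rule sum.cong) (simp_all add: hcomp_comp[OF N_grad tg])
      finally show ?thesis .
    qed
    have lfg: "lf nc x = nc g x" unfolding lf_def g_def by simp
    have bg: "b = act a g"
    proof (rule ccontr)
      assume "b \<noteq> act a g"
      then have "nc b (s r (lf nc x)) = 0" using hcomp_comp[OF N_grad tg[of g], of b] lfg by simp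
      then show False using h nz unfolding hcomp_def by simp
    qed
    have le2: "act a d \<le> b" if "d \<in> S" for d using act_mono2[OF le[OF that]] bg by simp
    have "\<forall>b'>b. nc b' (s r x) = 0"
    proof (intro allI impI)
      fix b' assume "b < b'"
      then have "\<forall>d\<in>S. b' \<noteq> act a d" using le2 by (metis leD)
      then show "nc b' (s r x) = 0" unfolding comp[of b'] by (intro sum.neutral ballI) simp
    qed
    moreover have "nc b (s r x) = s r (lf nc x)"
    proof -
      have "nc b (s r x) = (\<Sum>d\<in>S. if d = g then s r (nc d x) else 0)"
        unfolding bg comp[of "act a g"] by (rule sum.cong) (auto dest: act_canc2)
      also have "\<dots> = s r (nc g x)" using fS gS by simp
      finally show ?thesis using lfg by simp
    qed
    ultimately show ?thesis by blast
  qed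
  have P: "\<exists>m\<in>M. (\<forall>b'>b. nc b' m = 0) \<and> nc b m = w" if w: "w \<in> W b" for w b
  proof -
    have "w \<in> K.span {s r (lf nc x) | x r. x \<in> X \<and> (\<exists>a. r \<in> hcomp rc a) \<and> s r (lf nc x) \<in> hcomp nc b}"
      using w unfolding W_def Wsp_def .
    then show ?thesis
    proof (induction rule: K.span_induct)
      case base
      show ?case unfolding K.subspace_def
      proof (intro conjI ballI allI; clarsimp)
        show "\<exists>m\<in>M. (\<forall>b'>b. nc b' m = 0) \<and> nc b m = 0"
          using K.subspace_0[OF M_K] gc_zero[OF N_grad] by blast
      next
        fix m1 m2 assume "m1 \<in> M" "\<forall>b'>b. nc b' m1 = 0" "m2 \<in> M" "\<forall>b'>b. nc b' m2 = 0"
        then show "\<exists>m\<in>M. (\<forall>b'>b. nc b' m = 0) \<and> nc b m = nc b m1 + nc b m2"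
          using K.subspace_add[OF M_K] gc_add[OF N_grad] by (intro bexI[of _ "m1 + m2"]) auto
      next
        fix c m1 assume "m1 \<in> M" "\<forall>b'>b. nc b' m1 = 0"
        then show "\<exists>m\<in>M. (\<forall>b'>b. nc b' m = 0) \<and> nc b m = s (\<phi> c) (nc b m1)"
          using K.subspace_scale[OF M_K] N_klin by (intro bexI[of _ "s (\<phi> c) m1"]) auto
      qed
    next
      case (step w)
      then obtain x r a where x: "x \<in> X" and r: "r \<in> hcomp rc a" and h: "s r (lf nc x) \<in> hcomp nc b"
        and we: "w = s r (lf nc x)" by blast
      show ?case
      proof (cases "w = 0")
        case True
        then show ?thesis using K.subspace_0[OF M_K] gc_zero[OF N_grad] by blast
      next
        case False
        have "s r x \<in> M" using x X_M N.subspace_scale[OF M_sub] by blast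
        then show ?thesis using E[OF x r h] False we by blast
      qed
    qed
  qed
  have Q: "\<forall>n. (\<forall>b'>b. nc b' n = 0) \<longrightarrow> (\<exists>m c. m \<in> M \<and> c \<in> C \<and> (\<forall>b'>b. nc b' c = 0) \<and> n = m + c)" for b
  proof (induction b rule: less_induct)
    case (less b)
    show ?case
    proof (intro allI impI)
      fix n assume nb: "\<forall>b'>b. nc b' n = 0"
      obtain w w' where w: "w \<in> W b" and w': "w' \<in> cpl b (W b)" and nbe: "nc b n = w + w'"
        using cpl_dec[OF gc_in_hcomp[OF N_grad]] by blast
      obtain m0 where m0: "m0 \<in> M" "\<forall>b'>b. nc b' m0 = 0" "nc b m0 = w" using P[OF w] by blast
      have w'h: "w' \<in> hcomp nc b" using w' cpl_in by blast
      have w'c: "nc b' w' = (if b' = b then w' else 0)" for b' by (rule hcomp_comp[OF N_grad w'h])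
      have w'C: "nc b' w' \<in> cpl b' (W b')" for b'
        using w'c[of b'] w' K.subspace_0[OF cpl_sub] by simp
      define n1 where "n1 = n - m0 - w'"
      have n1c: "nc b' n1 = 0" if "b \<le> b'" for b'
      proof (cases "b' = b")
        case True
        then show ?thesis unfolding n1_def using gc_diff[OF N_grad] nbe m0 w'c by simp
      next
        case False
        then have "b < b'" using that by simp
        then show ?thesis unfolding n1_def using gc_diff[OF N_grad] nb m0 w'c False by simp
      qed
      show "\<exists>m c. m \<in> M \<and> c \<in> C \<and> (\<forall>b'>b. nc b' c = 0) \<and> n = m + c"
      proof (cases "n1 = 0")
        case True
        then have "n = m0 + w'" unfolding n1_def by (simp add: algebra_simps)
        moreover have "w' \<in> C" using C_iff w'C by blast
        moreover have "\<forall>b'>b. nc b' w' = 0" using w'c by simp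
        ultimately show ?thesis using m0 by blast
      next
        case False
        define g where "g = gdeg nc n1"
        have "nc g n1 \<noteq> 0" using gdeg_in[OF N_grad False] g_def by simp
        then have gb: "g < b" using n1c by (metis not_le)
        have "\<forall>b'>g. nc b' n1 = 0" using gdeg_above[OF N_grad] g_def by blast
        then obtain m1 c1 where m1: "m1 \<in> M" "c1 \<in> C" "\<forall>b'>g. nc b' c1 = 0" "n1 = m1 + c1"
          using less[OF gb] by blast
        have "n = (m0 + m1) + (w' + c1)" using m1(4) unfolding n1_def by (simp add: algebra_simps)
        moreover have "m0 + m1 \<in> M" using K.subspace_add[OF M_K] m0 m1 by blast
        moreover have "w' + c1 \<in> C"
          unfolding C_iff
        proof
          fix b'
          have c1b': "nc b' c1 \<in> cpl b' (W b')" using m1(2) C_iff by blast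
          show "nc b' (w' + c1) \<in> cpl b' (W b')"
          proof (cases "b' = b")
            case True
            then show ?thesis using gc_add[OF N_grad] w'c m1(3) gb w' by simp
          next
            case False
            then show ?thesis using gc_add[OF N_grad] w'c c1b' by simp
          qed
        qed
        moreover have "\<forall>b'>b. nc b' (w' + c1) = 0" using gc_add[OF N_grad] w'c m1(3) gb by auto
        ultimately show ?thesis by blast
      qed
    qed
  qed
  have C0': "0 \<in> C" unfolding C_iff using gc_zero[OF N_grad] K.subspace_0[OF cpl_sub] by simp
  have Cadd: "x + y \<in> C" if "x \<in> C" "y \<in> C" for x y
    using that unfolding C_iff using gc_add[OF N_grad] K.subspace_add[OF cpl_sub] by simp
  have Cscale: "s (\<phi> c) x \<in> C" if "x \<in> C" for x c
    using that unfolding C_iff using N_klin K.subspace_scale[OF cpl_sub] by simp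
  have C_sub: "K.subspace C"
    unfolding K.subspace_def using C0' Cadd Cscale by blast
  have C0: "0 \<in> C" using C_sub K.subspace_0 by blast
  have dec: "\<exists>m\<in>M. \<exists>c\<in>C. t = m + c" for t
  proof (cases "t = 0")
    case True
    have "0 \<in> M" by (rule K.subspace_0[OF M_K])
    moreover have "t = 0 + 0" using True by simp
    ultimately show ?thesis using C0 by blast
  next
    case False
    have "\<forall>b'>gdeg nc t. nc b' t = 0" using gdeg_above[OF N_grad] by blast
    then show ?thesis using Q[of "gdeg nc t"] by blast
  qed
  have "direct_sum (\<lambda>c. s (\<phi> c)) UNIV M C"
    unfolding direct_sum_def
  proof (intro conjI M_K C_sub subset_UNIV ballI)
    show "M \<inter> C = {0}" using inter C0 K.subspace_0[OF M_K] by blast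
  next
    fix t :: 'n assume "t \<in> UNIV" then show "\<exists>m\<in>M. \<exists>c\<in>C. t = m + c" by (rule dec[of t, THEN impI, THEN mp])
  qed
  then show ?thesis unfolding C_def W_def .
qed

end
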